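(* Let $(\mathbb E;B,Q;M)$ be a metric double vector bundle with core $Q^*$, and let $D\subseteq\mathbb E$ be a double vector subbundle with sides $B'\subseteq B$, $U\subseteq Q$ and core $K\subseteq Q^*$. Let $\Sigma\colon B\times_MQ\to\mathbb E$ be a linear splitting adapted to $D$ ($\Sigma(B'\times_MU)\subseteq D$) with associated symmetric form $\Lambda$. Then $D$ is maximal isotropic (i.e. $D_b$ is maximal isotropic in the fibre $\mathbb E_b$ of $\mathbb E\to B$ for all $b\in B'$) if and only if $U=K^\circ$ and $\Lambda(u_1,u_2)\in(B')^\circ$ for all $m\in M$ and $u_1,u_2\in U_m$.
   Context: A double vector bundle $(\mathbb E;B,Q;M)$ with core $Q^*$: $\mathbb E$ carries commuting vector bundle structures over $B$ and over $Q$; the core is the intersection of the kernels of the two projections. A linear splitting $\Sigma\colon B\times_MQ\to\mathbb E$ is a double vector bundle embedding inducing the identity on $B$ and $Q$; it yields $\mathbb E\cong B\times_MQ\times_MQ^*$ (additions $(b,q,\tau)+_B(b,q',\tau')=(b,q+q',\tau+\tau')$, $(b,q,\tau)+_Q(b',q,\tau')=(b+b',q,\tau+\tau')$), horizontal lifts $\sigma_Q(q)(b_m)=\Sigma(b_m,q(m))$ and core sections $\tau^\dagger(b_m)=(b_m,0,\tau(m))$. The double vector bundle is metric if $\mathbb E\to B$ has a symmetric fibrewise nondegenerate pairing with $\langle\tau_1^\dagger,\tau_2^\dagger\rangle=0$, $\langle\chi,\tau^\dagger\rangle=q_B^*\langle q,\tau\rangle$ for linear sections $\chi$ over $q$, and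 $\langle\chi_1,\chi_2\rangle$ fibrewise linear on $B$ for linear sections. $\Lambda\colon Q\times_MQ\to B^*$ (symmetric bilinear) is defined by $\langle\sigma_Q(q_1),\sigma_Q(q_2)\rangle=\ell_{\Lambda(q_1,q_2)}$, $\ell_\beta$ the linear function on $B$ of $\beta\in\Gamma(B^* )$; thus $\langle(b,q_1,\tau_1),(b,q_2,\tau_2)\rangle=\langle\Lambda(q_1,q_2),b\rangle+\langle q_1,\tau_2\rangle+\langle q_2,\tau_1\rangle$. An adapted double subbundle with sides $B',U$, core $K$ corresponds to $B'\times_MU\times_MK$. $K^\circ\subseteq Q$, $(B')^\circ\subseteq B^*$ are annihilators. *)

theory Defs
  imports "HOL-Analysis.Analysis"
begin

text \<open>Everything is modelled fibrewise over points m of the base M, in the decomposition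
  E = B \<times>_M Q \<times>_M Q^* induced by the linear splitting Sigma.  The fibres of B and Q
  are the finite-dimensional real spaces 'b and 'q; the fibre of the core Q^* is the space
  'c, identified with the dual of 'q through a perfect pairing qp.\<close>

definition perfect_pairing :: "('q::euclidean_space \<Rightarrow> 'c::euclidean_space \<Rightarrow> real) \<Rightarrow> bool" where
  "perfect_pairing qp \<longleftrightarrow> bilinear qp
     \<and> (\<forall>q. (\<forall>t. qp q t = 0) \<longrightarrow> q = 0)
     \<and> (\<forall>t. (\<forall>q. qp q t = 0) \<longrightarrow> t = 0)"

definition sym_bilinear_dual ::
    "('q::euclidean_space \<Rightarrow> 'q \<Rightarrow> 'b::euclidean_space \<Rightarrow> real) \<Rightarrow> bool" where
  "sym_bilinear_dual L \<longleftrightarrow>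
     (\<forall>q1 q2. linear (L q1 q2))
     \<and> (\<forall>b. bilinear (\<lambda>q1 q2. L q1 q2 b))
     \<and> (\<forall>q1 q2. L q1 q2 = L q2 q1)"

text \<open>The metric of E restricted to the fibre E_b = {b} \<times> Q_m \<times> Q^*_m, b \<in> B_m:
  <(b,q1,t1),(b,q2,t2)> = <Lambda(q1,q2),b> + <q1,t2> + <q2,t1>.\<close>
definition dvb_pairing ::
    "('q \<Rightarrow> 'c \<Rightarrow> real) \<Rightarrow> ('q \<Rightarrow> 'q \<Rightarrow> 'b \<Rightarrow> real) \<Rightarrow> 'b \<Rightarrow> ('q \<times> 'c) \<Rightarrow> ('q \<times> 'c) \<Rightarrow> real" where
  "dvb_pairing qp L b x y = L (fst x) (fst y) b + qp (fst x) (snd y) + qp (fst y) (snd x)"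

definition isotropic :: "('v \<Rightarrow> 'v \<Rightarrow> real) \<Rightarrow> 'v set \<Rightarrow> bool" where
  "isotropic g S \<longleftrightarrow> (\<forall>x\<in>S. \<forall>y\<in>S. g x y = 0)"

definition maximal_isotropic :: "('v::real_vector \<Rightarrow> 'v \<Rightarrow> real) \<Rightarrow> 'v set \<Rightarrow> bool" where
  "maximal_isotropic g S \<longleftrightarrow> subspace S \<and> isotropic g S
     \<and> (\<forall>T. subspace T \<and> isotropic g T \<and> S \<subseteq> T \<longrightarrow> T = S)"

definition core_annihilator :: "('q \<Rightarrow> 'c \<Rightarrow> real) \<Rightarrow> 'c set \<Rightarrow> 'q set" where
  "core_annihilator qp K = {q. \<forall>t\<in>K. qp q t = 0}"

definition dual_annihilator :: "'b::real_vector set \<Rightarrow> ('b \<Rightarrow> real) set" where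
  "dual_annihilator B' = {\<beta>. linear \<beta> \<and> (\<forall>b\<in>B'. \<beta> b = 0)}"

end

theory Submission
  imports Defs
begin

lemma rep: fixes f :: "'c::euclidean_space \<Rightarrow> real" assumes "linear f"
  shows "f x = inner x (\<Sum>i\<in>Basis. f i *\<^sub>R i)"
proof -
  have "f x = f (\<Sum>i\<in>Basis. (x \<bullet> i) *\<^sub>R i)" by (simp add: euclidean_representation)
  also have "\<dots> = (\<Sum>i\<in>Basis. (x \<bullet> i) * f i)" using assms by (simp add: linear_sum linear_scale)
  also have "\<dots> = inner x (\<Sum>i\<in>Basis. f i *\<^sub>R i)" by (simp add: inner_sum_right mult.commute)
  finally show ?thesis .
qed

lemma pp_surj:
  fixes qp :: "'q::euclidean_space \<Rightarrow> 'c::euclidean_space \<Rightarrow> real"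
  assumes pp: "perfect_pairing qp"
  shows "\<exists>q. \<forall>c. qp q c = inner c z"
proof -
  define \<phi> where "\<phi> q = (\<Sum>i\<in>Basis. qp q i *\<^sub>R i)" for q
  have bl: "bilinear qp" using pp by (simp add: perfect_pairing_def)
  have repq: "qp q c = inner c (\<phi> q)" for q c
    unfolding \<phi>_def by (rule rep) (use bl in \<open>simp add: bilinear_def\<close>)
  have lin: "linear \<phi>"
    by (rule linearI) (simp_all add: \<phi>_def bilinear_ladd[OF bl] bilinear_lmul[OF bl]
        scaleR_add_left sum.distrib scaleR_sum_right)
  have sub: "subspace (range \<phi>)" using linear_subspace_image[OF lin subspace_UNIV] by simp
  obtain y w where y: "y \<in> span (range \<phi>)" and w: "\<And>v. v \<in> span (range \<phi>) \<Longrightarrow> orthogonal w v"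
    and z: "z = y + w" using orthogonal_subspace_decomp_exists[of "range \<phi>" z] by blast
  have "qp q w = 0" for q
  proof -
    have "orthogonal w (\<phi> q)" using w by (simp add: span_base)
    then show ?thesis by (simp add: repq orthogonal_def inner_commute)
  qed
  then have "w = 0" using pp by (simp add: perfect_pairing_def)
  moreover have "y \<in> range \<phi>" using y sub by (metis span_eq_iff)
  ultimately obtain q where "z = \<phi> q" using z by auto
  then show ?thesis by (auto simp: repq)
qed

lemma double_ann:
  fixes qp :: "'q::euclidean_space \<Rightarrow> 'c::euclidean_space \<Rightarrow> real"
  assumes pp: "perfect_pairing qp" and K: "subspace K"
    and t: "\<And>q. (\<forall>k\<in>K. qp q k = 0) \<Longrightarrow> qp q t = 0"
  shows "t \<in> K"
proof (rule ccontr)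
  assume nt: "t \<notin> K"
  obtain y z where y: "y \<in> span K" and z: "\<And>v. v \<in> span K \<Longrightarrow> orthogonal z v"
    and tz: "t = y + z" using orthogonal_subspace_decomp_exists[of K t] by blast
  have yK: "y \<in> K" using y K by (metis span_eq_iff)
  have "z \<noteq> 0" using nt yK tz by auto
  obtain q where q: "\<And>c. qp q c = inner c z" using pp_surj[OF pp] by blast
  have "\<forall>k\<in>K. qp q k = 0" using z q by (auto simp: span_base orthogonal_def inner_commute)
  then have "qp q t = 0" by (rule t)
  moreover have "qp q t = inner z z"
  proof -
    have "y \<bullet> z = 0" using z[OF y] by (simp add: orthogonal_def inner_commute)
    then show ?thesis using q tz by (simp add: inner_add_left)
  qed
  ultimately show False using \<open>z \<noteq> 0\<close> by simp
qed

theorem proposition5p2: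
  fixes M :: "'m set"
    and qp :: "'q::euclidean_space \<Rightarrow> 'c::euclidean_space \<Rightarrow> real"
    and \<Lambda> :: "'m \<Rightarrow> 'q \<Rightarrow> 'q \<Rightarrow> 'b::euclidean_space \<Rightarrow> real"
    and B' :: "'m \<Rightarrow> 'b set" and U :: "'m \<Rightarrow> 'q set" and K :: "'m \<Rightarrow> 'c set"
  assumes "perfect_pairing qp"
    and "\<forall>m\<in>M. sym_bilinear_dual (\<Lambda> m)"
    and "\<forall>m\<in>M. subspace (B' m) \<and> subspace (U m) \<and> subspace (K m)"
  shows "(\<forall>m\<in>M. \<forall>b\<in>B' m. maximal_isotropic (dvb_pairing qp (\<Lambda> m) b) (U m \<times> K m))
     \<longleftrightarrow> (\<forall>m\<in>M. U m = core_annihilator qp (K m)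
            \<and> (\<forall>u1\<in>U m. \<forall>u2\<in>U m. \<Lambda> m u1 u2 \<in> dual_annihilator (B' m)))"
proof -
  have bl: "bilinear qp" using assms(1) by (simp add: perfect_pairing_def)
  have qp0r[simp]: "qp q 0 = 0" for q using bilinear_rzero[OF bl] .
  have qp0l[simp]: "qp 0 t = 0" for t using bilinear_lzero[OF bl] .
  have L0: "\<Lambda> m q 0 b = 0" "\<Lambda> m 0 q b = 0" if "m \<in> M" for m q b
  proof -
    have "bilinear (\<lambda>q1 q2. \<Lambda> m q1 q2 b)" using assms(2) that by (simp add: sym_bilinear_dual_def)
    from bilinear_rzero[OF this] bilinear_lzero[OF this] show "\<Lambda> m q 0 b = 0" "\<Lambda> m 0 q b = 0" by auto
  qed
  have Lb0: "\<Lambda> m q1 q2 0 = 0" if "m \<in> M" for m q1 q2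
    using assms(2) that by (simp add: sym_bilinear_dual_def linear_0)
  have annsub: "subspace (core_annihilator qp K')" for K'
    unfolding subspace_def core_annihilator_def
    by (auto simp: bilinear_ladd[OF bl] bilinear_lmul[OF bl])
  show ?thesis
  proof
    assume H: "\<forall>m\<in>M. \<forall>b\<in>B' m. maximal_isotropic (dvb_pairing qp (\<Lambda> m) b) (U m \<times> K m)"
    show "\<forall>m\<in>M. U m = core_annihilator qp (K m)
            \<and> (\<forall>u1\<in>U m. \<forall>u2\<in>U m. \<Lambda> m u1 u2 \<in> dual_annihilator (B' m))"
    proof (rule ballI, rule conjI)
      fix m assume m: "m \<in> M"
      have sB: "subspace (B' m)" and sU: "subspace (U m)" and sK: "subspace (K m)" using assms(3) m by auto
      have U0: "0 \<in> U m" and K0: "0 \<in> K m" and B0: "0 \<in> B' m"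
        using sU sK sB by (auto simp: subspace_def)
      have MI: "maximal_isotropic (dvb_pairing qp (\<Lambda> m) 0) (U m \<times> K m)" using H m B0 by auto
      have sub1: "U m \<subseteq> core_annihilator qp (K m)"
      proof
        fix u assume u: "u \<in> U m"
        have "qp u k = 0" if k: "k \<in> K m" for k
        proof -
          have "dvb_pairing qp (\<Lambda> m) 0 (u, 0) (0, k) = 0"
            using MI u k U0 K0 by (auto simp: maximal_isotropic_def isotropic_def)
          then show ?thesis using L0[OF m] by (simp add: dvb_pairing_def)
        qed
        then show "u \<in> core_annihilator qp (K m)" by (simp add: core_annihilator_def)
      qed
      have "core_annihilator qp (K m) \<times> K m = U m \<times> K m"
      proof -
        have "subspace (core_annihilator qp (K m) \<times> K m)" by (rule subspace_Times[OF annsub sK])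
        moreover have "isotropic (dvb_pairing qp (\<Lambda> m) 0) (core_annihilator qp (K m) \<times> K m)"
          by (auto simp: isotropic_def dvb_pairing_def Lb0[OF m] core_annihilator_def)
        moreover have "U m \<times> K m \<subseteq> core_annihilator qp (K m) \<times> K m" using sub1 by auto
        ultimately show ?thesis using MI unfolding maximal_isotropic_def by blast
      qed
      then show "U m = core_annihilator qp (K m)" using K0 by (metis fst_image_times empty_iff)
      show "\<forall>u1\<in>U m. \<forall>u2\<in>U m. \<Lambda> m u1 u2 \<in> dual_annihilator (B' m)"
      proof (intro ballI)
        fix u1 u2 assume u: "u1 \<in> U m" "u2 \<in> U m"
        have "\<Lambda> m u1 u2 b = 0" if b: "b \<in> B' m" for b
        proof -
          have "dvb_pairing qp (\<Lambda> m) b (u1, 0) (u2, 0) = 0"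
            using H m b u K0 by (auto simp: maximal_isotropic_def isotropic_def)
          then show ?thesis by (simp add: dvb_pairing_def)
        qed
        moreover have "linear (\<Lambda> m u1 u2)" using assms(2) m by (simp add: sym_bilinear_dual_def)
        ultimately show "\<Lambda> m u1 u2 \<in> dual_annihilator (B' m)" by (simp add: dual_annihilator_def)
      qed
    qed
  next
    assume H: "\<forall>m\<in>M. U m = core_annihilator qp (K m)
            \<and> (\<forall>u1\<in>U m. \<forall>u2\<in>U m. \<Lambda> m u1 u2 \<in> dual_annihilator (B' m))"
    show "\<forall>m\<in>M. \<forall>b\<in>B' m. maximal_isotropic (dvb_pairing qp (\<Lambda> m) b) (U m \<times> K m)"
    proof (intro ballI)
      fix m b assume m: "m \<in> M" and b: "b \<in> B' m"
      have sU: "subspace (U m)" and sK: "subspace (K m)" using assms(3) m by auto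
      have K0: "0 \<in> K m" using sK by (auto simp: subspace_def)
      have Ueq: "U m = core_annihilator qp (K m)" using H m by blast
      have Lz: "\<Lambda> m u1 u2 b = 0" if "u1 \<in> U m" "u2 \<in> U m" for u1 u2
        using H m b that by (auto simp: dual_annihilator_def)
      have iso: "isotropic (dvb_pairing qp (\<Lambda> m) b) (U m \<times> K m)"
        using Lz by (auto simp: isotropic_def dvb_pairing_def Ueq core_annihilator_def)
      show "maximal_isotropic (dvb_pairing qp (\<Lambda> m) b) (U m \<times> K m)"
        unfolding maximal_isotropic_def
      proof (intro conjI allI impI)
        show "subspace (U m \<times> K m)" by (rule subspace_Times[OF sU sK])
        show "isotropic (dvb_pairing qp (\<Lambda> m) b) (U m \<times> K m)" by (rule iso)
        fix T assume T: "subspace T \<and> isotropic (dvb_pairing qp (\<Lambda> m) b) T \<and> U m \<times> K m \<subseteq> T"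
        have "T \<subseteq> U m \<times> K m"
        proof
          fix x assume x: "x \<in> T"
          obtain q t where qt: "x = (q, t)" by force
          have qU: "q \<in> U m"
          proof -
            have "qp q k = 0" if k: "k \<in> K m" for k
            proof -
              have "(0, k) \<in> T" using T k sU by (auto simp: subspace_def)
              then have "dvb_pairing qp (\<Lambda> m) b (q, t) (0, k) = 0"
                using T x qt by (auto simp: isotropic_def)
              then show ?thesis using L0[OF m] by (simp add: dvb_pairing_def)
            qed
            then show ?thesis using Ueq by (simp add: core_annihilator_def)
          qed
          have "(q, 0) \<in> T" using T qU K0 by auto
          then have t0: "(0, t) \<in> T" using T x qt subspace_diff[of T "(q,t)" "(q,0)"] by auto
          have "t \<in> K m"
          proof (rule double_ann[OF assms(1) sK])
            fix u assume "\<forall>k\<in>K m. qp u k = 0"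
            then have uU: "u \<in> U m" using Ueq by (simp add: core_annihilator_def)
            then have "(u, 0) \<in> T" using T K0 by auto
            then have "dvb_pairing qp (\<Lambda> m) b (0, t) (u, 0) = 0"
              using T t0 by (auto simp: isotropic_def)
            then show "qp u t = 0" using L0[OF m] by (simp add: dvb_pairing_def)
          qed
          then show "x \<in> U m \<times> K m" using qt qU by simp
        qed
        then show "T = U m \<times> K m" using T by blast
      qed
    qed
  qed
qed

end
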